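(* Let $\tau$ and $\tau'$ be topologies on a set $X$ such that $(X,\tau)$ is quasi-Polish, $(X,\tau')$ is separable and metrizable, and $\tau\subseteq\tau'\subseteq\mathbf{\Sigma}^0_2(X,\tau)$. Then $(X,\tau')$ is Polish.
   Context: $\mathbf{\Sigma}^0_2(X,\tau)$ is the family of all sets of the form $\bigcup_{i\in\omega}(U_i\setminus V_i)$ with $U_i,V_i\in\tau$. A quasi-metric on a set $X$ is a function $d\colon X\times X\to[0,\infty)$ with $x=y$ iff $d(x,y)=d(y,x)=0$ and $d(x,z)\le d(x,y)+d(y,z)$; it induces the topology generated by $B_d(x,\varepsilon)=\{y\mid d(x,y)<\varepsilon\}$; $\widehat d(x,y)=\max\{d(x,y),d(y,x)\}$. $(x_n)$ is Cauchy if for every $\varepsilon>0$ there is $n_0$ with $d(x_n,x_m)<\varepsilon$ for all $m\ge n\ge n_0$; $d$ is complete if every Cauchy sequence converges in the topology of $\widehat d$. A space is quasi-Polish if it is countably based and its topology is induced by a complete quasi-metric. *)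

theory Defs
  imports "HOL-Analysis.Analysis"
begin

definition quasi_metric :: "'a set \<Rightarrow> ('a \<Rightarrow> 'a \<Rightarrow> real) \<Rightarrow> bool" where
  "quasi_metric X d \<longleftrightarrow>
     (\<forall>x\<in>X. \<forall>y\<in>X. 0 \<le> d x y) \<and>
     (\<forall>x\<in>X. \<forall>y\<in>X. (x = y \<longleftrightarrow> d x y = 0 \<and> d y x = 0)) \<and>
     (\<forall>x\<in>X. \<forall>y\<in>X. \<forall>z\<in>X. d x z \<le> d x y + d y z)"

definition qball :: "'a set \<Rightarrow> ('a \<Rightarrow> 'a \<Rightarrow> real) \<Rightarrow> 'a \<Rightarrow> real \<Rightarrow> 'a set" where
  "qball X d x e = {y \<in> X. d x y < e}"

definition qmtopology :: "'a set \<Rightarrow> ('a \<Rightarrow> 'a \<Rightarrow> real) \<Rightarrow> 'a topology" where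
  "qmtopology X d = topology_generated_by {qball X d x e | x e. x \<in> X \<and> e > 0}"

definition dhat :: "('a \<Rightarrow> 'a \<Rightarrow> real) \<Rightarrow> 'a \<Rightarrow> 'a \<Rightarrow> real" where
  "dhat d x y = max (d x y) (d y x)"

definition qcauchy :: "('a \<Rightarrow> 'a \<Rightarrow> real) \<Rightarrow> (nat \<Rightarrow> 'a) \<Rightarrow> bool" where
  "qcauchy d xs \<longleftrightarrow> (\<forall>\<epsilon>>0. \<exists>n0. \<forall>n m. n0 \<le> n \<and> n \<le> m \<longrightarrow> d (xs n) (xs m) < \<epsilon>)"

definition qcomplete :: "'a set \<Rightarrow> ('a \<Rightarrow> 'a \<Rightarrow> real) \<Rightarrow> bool" where
  "qcomplete X d \<longleftrightarrow>
     (\<forall>xs. range xs \<subseteq> X \<and> qcauchy d xs \<longrightarrow> (\<exists>x\<in>X. (\<lambda>n. dhat d x (xs n)) \<longlonglongrightarrow> 0))"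

definition quasi_Polish :: "'a topology \<Rightarrow> bool" where
  "quasi_Polish T \<longleftrightarrow> second_countable T \<and>
     (\<exists>d. quasi_metric (topspace T) d \<and> qcomplete (topspace T) d \<and> T = qmtopology (topspace T) d)"

definition Polish_space :: "'a topology \<Rightarrow> bool" where
  "Polish_space T \<longleftrightarrow> separable_space T \<and> completely_metrizable_space T"

definition Sigma02 :: "'a topology \<Rightarrow> 'a set set" where
  "Sigma02 T = {A. \<exists>U V. (\<forall>i::nat. openin T (U i) \<and> openin T (V i)) \<and> A = (\<Union>i. U i - V i)}"

end

theory Submission
  imports Defs
begin

lemma (in Metric_space) sep_imp_second_countable:
  assumes "separable_space mtopology"
  shows "second_countable mtopology"
proof -
  obtain C where C: "countable C" "C \<subseteq> M" "mtopology closure_of C = M"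
    using assms unfolding separable_space_def by auto
  define B where "B = (\<lambda>(a,n). mball a (1 / real (Suc n))) ` (C \<times> (UNIV::nat set))"
  have "countable B" unfolding B_def using C(1) by (intro countable_image countable_SIGMA) auto
  moreover have "\<forall>V\<in>B. openin mtopology V" unfolding B_def by (simp add: split_def)
  moreover have "\<exists>V\<in>B. x \<in> V \<and> V \<subseteq> U" if oU0: "openin mtopology U" and xU: "x \<in> U" for U x
  proof -
    have oU: "U \<subseteq> M \<and> (\<forall>x. x \<in> U \<longrightarrow> (\<exists>r>0. mball x r \<subseteq> U))"
      using openin_mtopology oU0 by simp
    obtain r where r: "r > 0" "mball x r \<subseteq> U" using oU xU by blast
    obtain n where n: "inverse (real (Suc n)) < r/2"
      using r(1) reals_Archimedean[of "r/2"] by auto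
    then have n: "1 / real (Suc n) < r/2" by (simp add: inverse_eq_divide)
    have xM: "x \<in> M" using oU xU by blast
    have "x \<in> mtopology closure_of C" using C(3) xM by simp
    moreover have "x \<in> mball x (1 / real (Suc n))" using xM by simp
    ultimately obtain a where a: "a \<in> C" "a \<in> mball x (1 / real (Suc n))"
      unfolding in_closure_of using openin_mball by blast
    have "mball a (1 / real (Suc n)) \<subseteq> mball x r"
    proof
      fix z assume z: "z \<in> mball a (1 / real (Suc n))"
      have zM: "z \<in> M" and az: "d a z < 1 / real (Suc n)" using z by auto
      have aM: "a \<in> M" and xa: "d x a < 1 / real (Suc n)" using a by auto
      have "d x z \<le> d x a + d a z" using aM zM xM triangle by blast
      then have "d x z < r" using az xa n by linarith
      then show "z \<in> mball x r" using xM zM by simp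
    qed
    moreover have "x \<in> mball a (1 / real (Suc n))" using a commute xM by auto
    moreover have "mball a (1 / real (Suc n)) \<in> B" unfolding B_def
      by (rule image_eqI[where x="(a,n)"]) (simp_all add: a(1))
    ultimately show ?thesis using r by blast
  qed
  ultimately show ?thesis unfolding second_countable_def by blast
qed

lemma qm_tri: "quasi_metric X d \<Longrightarrow> x \<in> X \<Longrightarrow> y \<in> X \<Longrightarrow> z \<in> X \<Longrightarrow> d x z \<le> d x y + d y z"
  unfolding quasi_metric_def by blast

lemma qm_refl: "quasi_metric X d \<Longrightarrow> x \<in> X \<Longrightarrow> d x x = 0"
  unfolding quasi_metric_def by blast

lemma qm_nonneg: "quasi_metric X d \<Longrightarrow> x \<in> X \<Longrightarrow> y \<in> X \<Longrightarrow> 0 \<le> d x y"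
  unfolding quasi_metric_def by blast

lemma qm_ball_open:
  assumes "x \<in> X" "e > 0"
  shows "openin (qmtopology X d) (qball X d x e)"
  unfolding qmtopology_def openin_topology_generated_by_iff
  by (rule generate_topology_on.Basis) (use assms in blast)

lemma qm_open_ball_sub:
  assumes qm: "quasi_metric X d" and U: "openin (qmtopology X d) U" and x: "x \<in> U"
  shows "\<exists>r>0. qball X d x r \<subseteq> U"
proof -
  have "generate_topology_on {qball X d x e |x e. x \<in> X \<and> e > 0} U"
    using U unfolding qmtopology_def openin_topology_generated_by_iff .
  then show ?thesis using x
  proof (induction arbitrary: x)
    case Empty
    then show ?case by simp
  next
    case (Int a b)
    obtain r1 where r1: "r1 > 0" "qball X d x r1 \<subseteq> a" using Int by blast
    obtain r2 where r2: "r2 > 0" "qball X d x r2 \<subseteq> b" using Int by blast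
    have "qball X d x (min r1 r2) \<subseteq> a \<inter> b"
      using r1 r2 unfolding qball_def by auto
    then show ?case using r1 r2 by (intro exI[of _ "min r1 r2"]) auto
  next
    case (UN K)
    then obtain k where "k \<in> K" "x \<in> k" by blast
    then obtain r where "r > 0" "qball X d x r \<subseteq> k" using UN by blast
    then show ?case using \<open>k \<in> K\<close> by blast
  next
    case (Basis s)
    then obtain c e where s: "s = qball X d c e" "c \<in> X" "e > 0" by blast
    have xX: "x \<in> X" and cx: "d c x < e" using Basis s unfolding qball_def by auto
    have "qball X d x (e - d c x) \<subseteq> s"
    proof
      fix z assume "z \<in> qball X d x (e - d c x)"
      then have zX: "z \<in> X" and xz: "d x z < e - d c x" unfolding qball_def by auto
      have "d c z \<le> d c x + d x z" using qm_tri[OF qm s(2) xX zX] .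
      then show "z \<in> s" using xz zX s(1) unfolding qball_def by simp
    qed
    then show ?case using cx by (intro exI[of _ "e - d c x"]) simp
  qed
qed


lemma main_gdelta:
  fixes \<tau> \<tau>' :: "'a topology" and Z :: "'b topology" and g :: "'a \<Rightarrow> 'b"
  assumes tX: "topspace \<tau> = X" and tX': "topspace \<tau>' = X"
    and qm: "quasi_metric X d" and qc: "qcomplete X d" and teq: "\<tau> = qmtopology X d"
    and sc: "second_countable \<tau>" and sc': "second_countable \<tau>'"
    and sub: "\<And>U. openin \<tau> U \<Longrightarrow> openin \<tau>' U"
    and sig: "\<And>U. openin \<tau>' U \<Longrightarrow> U \<in> Sigma02 \<tau>"
    and Zm: "metrizable_space Z" and emb: "embedding_map \<tau>' Z g"
  shows "gdelta_in Z (g ` X)"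
proof -
  obtain \<BB> where BB0: "countable \<BB>" "\<forall>V\<in>\<BB>. openin \<tau> V"
    "\<forall>U x. openin \<tau> U \<and> x \<in> U \<longrightarrow> (\<exists>V\<in>\<BB>. x \<in> V \<and> V \<subseteq> U)"
    using sc unfolding second_countable_def by blast
  have BB: "countable \<BB>" "\<And>V. V \<in> \<BB> \<Longrightarrow> openin \<tau> V"
    "\<And>U x. openin \<tau> U \<Longrightarrow> x \<in> U \<Longrightarrow> \<exists>V\<in>\<BB>. x \<in> V \<and> V \<subseteq> U"
    using BB0 by auto
  obtain \<PP> where PP0: "countable \<PP>" "\<forall>V\<in>\<PP>. openin \<tau>' V"
    "\<forall>U x. openin \<tau>' U \<and> x \<in> U \<longrightarrow> (\<exists>V\<in>\<PP>. x \<in> V \<and> V \<subseteq> U)"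
    using sc' unfolding second_countable_def by blast
  have PP: "countable \<PP>" "\<And>V. V \<in> \<PP> \<Longrightarrow> openin \<tau>' V"
    "\<And>U x. openin \<tau>' U \<Longrightarrow> x \<in> U \<Longrightarrow> \<exists>V\<in>\<PP>. x \<in> V \<and> V \<subseteq> U"
    using PP0 by auto
  define S where "S = g ` X"
  have hom: "homeomorphic_map \<tau>' (subtopology Z S) g"
    using emb unfolding embedding_map_def S_def tX' .
  have inj: "inj_on g X" using homeomorphic_imp_injective_map[OF hom] tX' by simp
  have cont: "continuous_map \<tau>' Z g"
    using homeomorphic_imp_continuous_map[OF hom] continuous_map_in_subtopology by blast
  have SZ: "S \<subseteq> topspace Z"
    using continuous_map_image_subset_topspace[OF cont] tX' S_def by simp
  have gopen: "\<exists>W. openin Z W \<and> g ` A = W \<inter> S" if "openin \<tau>' A" for A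
  proof -
    have "openin (subtopology Z S) (g ` A)"
      using homeomorphic_imp_open_map[OF hom] that unfolding open_map_def by blast
    then show ?thesis unfolding openin_subtopology .
  qed
  have HZ: "Hausdorff_space Z" using Zm metrizable_imp_Hausdorff_space by blast
  have ex0: "\<forall>P\<in>\<PP>. \<exists>UV::(nat \<Rightarrow> 'a set) \<times> (nat \<Rightarrow> 'a set).
          (\<forall>i. openin \<tau> (fst UV i) \<and> openin \<tau> (snd UV i)) \<and> P = (\<Union>i. fst UV i - snd UV i)"
  proof
    fix P assume "P \<in> \<PP>"
    then have "P \<in> Sigma02 \<tau>" using PP(2) sig by blast
    then obtain U V where "\<forall>i::nat. openin \<tau> (U i) \<and> openin \<tau> (V i)" "P = (\<Union>i. U i - V i)"
      unfolding Sigma02_def by blast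
    then show "\<exists>UV::(nat \<Rightarrow> 'a set) \<times> (nat \<Rightarrow> 'a set).
          (\<forall>i. openin \<tau> (fst UV i) \<and> openin \<tau> (snd UV i)) \<and> P = (\<Union>i. fst UV i - snd UV i)"
      by (intro exI[of _ "(U,V)"]) simp
  qed
  define F :: "'a set \<Rightarrow> (nat \<Rightarrow> 'a set) \<times> (nat \<Rightarrow> 'a set)" where "F = (SOME F. \<forall>P\<in>\<PP>. (\<forall>i. openin \<tau> (fst (F P) i) \<and> openin \<tau> (snd (F P) i)) \<and>
      P = (\<Union>i. fst (F P) i - snd (F P) i))"
  have F0: "\<forall>P\<in>\<PP>. (\<forall>i. openin \<tau> (fst (F P) i) \<and> openin \<tau> (snd (F P) i)) \<and>
      P = (\<Union>i. fst (F P) i - snd (F P) i)"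
    using someI_ex[OF bchoice[OF ex0]] unfolding F_def .
  have F: "(\<forall>i. openin \<tau> (fst (F P) i) \<and> openin \<tau> (snd (F P) i)) \<and>
      P = (\<Union>i. fst (F P) i - snd (F P) i)" if "P \<in> \<PP>" for P
    using bspec[OF F0 that] .
  define UU where "UU P = fst (F P)" for P
  define VV where "VV P = snd (F P)" for P
  have UUo: "openin \<tau> (UU P i)" and VVo: "openin \<tau> (VV P i)" and Peq: "P = (\<Union>i. UU P i - VV P i)"
    if "P \<in> \<PP>" for P i using F[OF that] unfolding UU_def VV_def by auto
  have opsub: "A \<subseteq> X" if "openin \<tau> A" for A using openin_subset[OF that] tX by simp
  define H where "H A = {z \<in> topspace Z. \<exists>W. openin Z W \<and> z \<in> W \<and> W \<inter> S \<subseteq> g ` A}" for A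
  have Heq: "H A = \<Union>{W. openin Z W \<and> W \<inter> S \<subseteq> g ` A}" for A
  proof (intro equalityI subsetI)
    fix z assume "z \<in> H A" then show "z \<in> \<Union>{W. openin Z W \<and> W \<inter> S \<subseteq> g ` A}"
      unfolding H_def by blast
  next
    fix z assume "z \<in> \<Union>{W. openin Z W \<and> W \<inter> S \<subseteq> g ` A}"
    then obtain W where W: "openin Z W" "W \<inter> S \<subseteq> g ` A" "z \<in> W" by blast
    then have "z \<in> topspace Z" using openin_subset by blast
    then show "z \<in> H A" unfolding H_def using W by blast
  qed
  have Hopen: "openin Z (H A)" for A unfolding Heq by (rule openin_Union) blast
  have Hsub: "H A \<subseteq> topspace Z" for A unfolding H_def by blast
  have Hmono: "H A \<subseteq> H B" if AB: "A \<subseteq> B" for A B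
  proof
    fix z assume "z \<in> H A"
    then obtain W where W: "z \<in> topspace Z" "openin Z W" "z \<in> W" "W \<inter> S \<subseteq> g ` A"
      unfolding H_def by blast
    have "W \<inter> S \<subseteq> g ` B" using W(4) image_mono[OF AB] by (rule subset_trans)
    then show "z \<in> H B" unfolding H_def using W(1-3) by blast
  qed
  have HInt: "H (A \<inter> B) = H A \<inter> H B" if "A \<subseteq> X" "B \<subseteq> X" for A B
  proof
    show "H (A \<inter> B) \<subseteq> H A \<inter> H B" using Hmono[of "A \<inter> B" A] Hmono[of "A \<inter> B" B] by blast
    show "H A \<inter> H B \<subseteq> H (A \<inter> B)"
    proof
      fix z assume "z \<in> H A \<inter> H B"
      then obtain W1 W2 where W: "openin Z W1" "z \<in> W1" "W1 \<inter> S \<subseteq> g ` A"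
        "openin Z W2" "z \<in> W2" "W2 \<inter> S \<subseteq> g ` B" and zZ: "z \<in> topspace Z"
        unfolding H_def by blast
      have "(W1 \<inter> W2) \<inter> S \<subseteq> g ` (A \<inter> B)"
        using W inj_on_image_Int[OF inj that] by blast
      then show "z \<in> H (A \<inter> B)" unfolding H_def using W zZ by blast
    qed
  qed
  have HX: "H X = topspace Z" unfolding H_def S_def by blast
  have Hpt1: "x \<in> A" if xX: "x \<in> X" and gH: "g x \<in> H A" and AX: "A \<subseteq> X" for x A
  proof -
    obtain W where "openin Z W" "g x \<in> W" "W \<inter> S \<subseteq> g ` A" using gH unfolding H_def by blast
    then have "g x \<in> g ` A" using xX S_def by blast
    then show ?thesis using inj xX AX unfolding inj_on_def by blast
  qed
  have Hpt2: "g x \<in> H A" if Ao: "openin \<tau>' A" and xA: "x \<in> A" for x A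
  proof -
    obtain W where W: "openin Z W" "g ` A = W \<inter> S" using gopen[OF Ao] by blast
    then have "g x \<in> W" using xA by blast
    moreover have "g x \<in> topspace Z" using openin_subset[OF W(1)] \<open>g x \<in> W\<close> by blast
    ultimately show ?thesis unfolding H_def using W by blast
  qed
  define IB where "IB = insert X \<BB>"
  define VS where "VS = insert X ((\<lambda>(P,i). VV P i) ` (\<PP> \<times> (UNIV::nat set)))"
  have IBo: "openin \<tau> N" if "N \<in> IB" for N
    using that BB(2) openin_topspace[of \<tau>] tX unfolding IB_def by auto
  have VSo: "openin \<tau> V" if "V \<in> VS" for V
    using that VVo openin_topspace[of \<tau>] tX unfolding VS_def by auto
  have cIB: "countable IB" unfolding IB_def using BB(1) by simp
  have cVS: "countable VS" unfolding VS_def using PP(1) by (intro countable_insert countable_image countable_SIGMA) auto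
  define good where "good n A p = (case p of (C,c,r) \<Rightarrow> C \<in> \<BB> \<and> c \<in> X \<and> 0 < r \<and> r \<le> (1/2::real)^n \<and>
      qball X d c r \<subseteq> A \<and> C \<subseteq> qball X d c (r/2))" for n A and p :: "'a set \<times> 'a \<times> real"
  define Q where "Q N V n = (topspace Z - H (N \<inter> V)) \<union> \<Union>{H C | C c r. good n (N \<inter> V) (C,c,r)}" for N V n
  define R where "R P i = (topspace Z - H (UU P i)) \<union> H P \<union> H (VV P i)" for P i
  define GG where "GG = insert (Z closure_of S) ((\<lambda>(N,V,n). Q N V n) ` (IB \<times> VS \<times> (UNIV::nat set)) \<union> (\<lambda>(P,i). R P i) ` (\<PP> \<times> (UNIV::nat set)))"
  have cG: "countable GG" unfolding GG_def using cIB cVS PP(1)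
    by (intro countable_insert countable_Un countable_image countable_SIGMA) auto
  have clo: "closedin Z (topspace Z - H A)" for A by (rule closedin_diff[OF closedin_topspace Hopen])
  have gQ: "gdelta_in Z (Q N V n)" for N V n
  proof -
    have "openin Z (\<Union>{H C | C c r. good n (N \<inter> V) (C,c,r)})"
      by (rule openin_Union) (auto simp: Hopen)
    then show ?thesis unfolding Q_def
      by (intro gdelta_in_Un closed_imp_gdelta_in[OF Zm clo] open_imp_gdelta_in)
  qed
  have gR: "gdelta_in Z (R P i)" for P i
    unfolding R_def by (intro gdelta_in_Un closed_imp_gdelta_in[OF Zm clo] open_imp_gdelta_in Hopen)
  have gG: "gdelta_in Z T" if "T \<in> GG" for T
  proof -
    have "T = Z closure_of S \<or> (\<exists>N V n. T = Q N V n) \<or> (\<exists>P i. T = R P i)"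
      using that unfolding GG_def by (force simp: image_iff)
    then show ?thesis using gQ gR closed_imp_gdelta_in[OF Zm closedin_closure_of] by blast
  qed
  have G1: "S \<subseteq> \<Inter>GG"
  proof
    fix z assume "z \<in> S"
    then obtain x where xX: "x \<in> X" and z: "z = g x" unfolding S_def by blast
    have gxZ: "g x \<in> topspace Z" using SZ xX S_def by blast
    have inQ: "g x \<in> Q N V n" if NI: "N \<in> IB" and VI: "V \<in> VS" for N V n
    proof (cases "g x \<in> H (N \<inter> V)")
      case False then show ?thesis unfolding Q_def using gxZ by blast
    next
      case True
      have NVo: "openin \<tau> (N \<inter> V)" using IBo[OF NI] VSo[OF VI] by blast
      have "x \<in> N \<inter> V" using Hpt1[OF xX True opsub[OF NVo]] .
      then obtain r0 where r0: "r0 > 0" "qball X d x r0 \<subseteq> N \<inter> V"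
        using qm_open_ball_sub[OF qm] NVo teq by blast
      define r where "r = min r0 ((1/2::real)^n)"
      have r: "0 < r" "r \<le> (1/2)^n" "r \<le> r0" using r0 unfolding r_def by auto
      have "qball X d x r \<subseteq> qball X d x r0" using r(3) unfolding qball_def by auto
      then have rsub: "qball X d x r \<subseteq> N \<inter> V" using r0(2) by blast
      have "openin \<tau> (qball X d x (r/2))" using qm_ball_open[OF xX, of "r/2" d] r(1) teq by simp
      moreover have "x \<in> qball X d x (r/2)" using qm_refl[OF qm xX] xX r(1) unfolding qball_def by simp
      ultimately obtain C where C: "C \<in> \<BB>" "x \<in> C" "C \<subseteq> qball X d x (r/2)" using BB(3) by blast
      have "g x \<in> H C" using Hpt2[OF sub[OF BB(2)[OF C(1)]] C(2)] .
      moreover have "good n (N \<inter> V) (C,x,r)" unfolding good_def using C(1,3) xX r rsub by simp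
      ultimately show ?thesis unfolding Q_def by blast
    qed
    have inR: "g x \<in> R P i" if PI: "P \<in> \<PP>" for P i
    proof (cases "g x \<in> H (UU P i)")
      case False then show ?thesis unfolding R_def using gxZ by blast
    next
      case True
      then have xU: "x \<in> UU P i" using Hpt1[OF xX True opsub[OF UUo[OF PI]]] by simp
      show ?thesis
      proof (cases "x \<in> VV P i")
        case True then show ?thesis unfolding R_def using Hpt2[OF sub[OF VVo[OF PI]]] by blast
      next
        case False
        then have "x \<in> P" using xU Peq[OF PI] by blast
        then show ?thesis unfolding R_def using Hpt2[OF PP(2)[OF PI]] by blast
      qed
    qed
    have "g x \<in> Z closure_of S" using closure_of_subset[OF SZ] \<open>z \<in> S\<close> z by blast
    then show "z \<in> \<Inter>GG" unfolding GG_def using inQ inR z by auto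
  qed
  have G2: "\<Inter>GG \<subseteq> S"
  proof
    fix y assume yG: "y \<in> \<Inter>GG"
    have ycl: "y \<in> Z closure_of S" using yG unfolding GG_def by blast
    have yZ: "y \<in> topspace Z" using ycl closure_of_subset_topspace[of Z S] by blast
    have yQ: "y \<in> Q N V n" if NI: "N \<in> IB" and VI: "V \<in> VS" for N V n
    proof -
      have "Q N V n \<in> GG" unfolding GG_def
        by (intro insertI2 UnI1 image_eqI[where x="(N,V,n)"]) (use NI VI in auto)
      then show ?thesis using yG by blast
    qed
    have yR: "y \<in> R P i" if PI: "P \<in> \<PP>" for P i
    proof -
      have "R P i \<in> GG" unfolding GG_def
        by (intro insertI2 UnI2 image_eqI[where x="(P,i)"]) (use PI in auto)
      then show ?thesis using yG by blast
    qed
    have step: "\<exists>p. good n (N \<inter> V) p \<and> y \<in> H (fst p)"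
      if NI: "N \<in> IB" and VI: "V \<in> VS" and yH: "y \<in> H (N \<inter> V)" for N V n
    proof -
      have "y \<in> \<Union>{H C | C c r. good n (N \<inter> V) (C,c,r)}"
        using yQ[OF NI VI, of n] yH unfolding Q_def by blast
      then obtain C c r where "good n (N \<inter> V) (C,c,r)" "y \<in> H C" by blast
      then show ?thesis by (intro exI[of _ "(C,c,r)"]) simp
    qed
    define stp where "stp n A = (SOME p. good n A p \<and> y \<in> H (fst p))" for n A
    define en where "en = from_nat_into VS"
    have VSne: "VS \<noteq> {}" unfolding VS_def by blast
    have enVS: "en k \<in> VS" for k unfolding en_def using from_nat_into[OF VSne] .
    have enall: "\<exists>k. en k = V" if "V \<in> VS" for V
      using that range_from_nat_into[OF VSne cVS] unfolding en_def by (metis rangeE)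
    define Vs where "Vs k = (if y \<in> H (en k) then en k else X)" for k
    have XVS: "X \<in> VS" unfolding VS_def by blast
    have VsVS: "Vs k \<in> VS" for k unfolding Vs_def using enVS XVS by simp
    have yVs: "y \<in> H (Vs k)" for k unfolding Vs_def using HX yZ by simp
    define sq :: "nat \<Rightarrow> 'a set \<times> 'a \<times> real"
      where "sq = rec_nat (X, undefined, 1) (\<lambda>k p. stp (Suc k) (fst p \<inter> Vs k))"
    have sq0: "sq 0 = (X, undefined, 1)" and sqS: "sq (Suc k) = stp (Suc k) (fst (sq k) \<inter> Vs k)" for k
      by (simp_all add: sq_def)
    have gdS: "good (Suc k) (fst (sq k) \<inter> Vs k) (sq (Suc k)) \<and> y \<in> H (fst (sq (Suc k)))"
      if "fst (sq k) \<in> IB" "y \<in> H (fst (sq k))" for k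
    proof -
      have "y \<in> H (fst (sq k) \<inter> Vs k)"
        using HInt[OF opsub[OF IBo[OF that(1)]] opsub[OF VSo[OF VsVS]]] that(2) yVs by blast
      then have "\<exists>p. good (Suc k) (fst (sq k) \<inter> Vs k) p \<and> y \<in> H (fst p)"
        using step[OF that(1) VsVS] by blast
      then show ?thesis unfolding sqS stp_def by (rule someI_ex)
    qed
    have goodB: "fst p \<in> \<BB>" if "good n A p" for n A p
      using that unfolding good_def by (cases p) auto
    have inv: "fst (sq k) \<in> IB \<and> y \<in> H (fst (sq k))" for k
    proof (induction k)
      case 0
      then show ?case using HX yZ unfolding sq0 IB_def by simp
    next
      case (Suc k)
      then have "good (Suc k) (fst (sq k) \<inter> Vs k) (sq (Suc k)) \<and> y \<in> H (fst (sq (Suc k)))"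
        using gdS by blast
      then show ?case using goodB unfolding IB_def by blast
    qed
    define Nn where "Nn k = fst (sq k)" for k
    define cs where "cs k = fst (snd (sq (Suc k)))" for k
    define rs where "rs k = snd (snd (sq (Suc k)))" for k
    have gd: "good (Suc k) (Nn k \<inter> Vs k) (Nn (Suc k), cs k, rs k)" for k
    proof -
      have "sq (Suc k) = (Nn (Suc k), cs k, rs k)" unfolding Nn_def cs_def rs_def by simp
      then show ?thesis using gdS[OF conjunct1[OF inv] conjunct2[OF inv], of k] unfolding Nn_def by simp
    qed
    have csX: "cs k \<in> X" and rspos: "0 < rs k" and rsle: "rs k \<le> (1/2)^(Suc k)"
      and ballsub: "qball X d (cs k) (rs k) \<subseteq> Nn k \<inter> Vs k"
      and Nsub: "Nn (Suc k) \<subseteq> qball X d (cs k) (rs k / 2)" for k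
      using gd[of k] unfolding good_def by simp_all
    have yN: "y \<in> H (Nn k)" for k using inv unfolding Nn_def by blast
    have halfball: "qball X d (cs k) (rs k / 2) \<subseteq> qball X d (cs k) (rs k)" for k
      using rspos[of k] unfolding qball_def by auto
    have nest: "Nn (Suc k) \<subseteq> Nn k" for k using Nsub[of k] halfball[of k] ballsub[of k] by blast
    have nest_le: "Nn m \<subseteq> Nn k" if "k \<le> m" for k m
      using lift_Suc_antimono_le[of Nn, OF nest that] .
    have csin: "cs m \<in> Nn m \<inter> Vs m" for m
    proof -
      have "cs m \<in> qball X d (cs m) (rs m)"
        using csX[of m] rspos[of m] qm_refl[OF qm csX[of m]] unfolding qball_def by simp
      then show ?thesis using ballsub by blast
    qed
    have dcs: "d (cs j) (cs m) < rs j / 2" if "j < m" for j m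
    proof -
      have "Suc j \<le> m" using that by simp
      then have "cs m \<in> Nn (Suc j)" using csin[of m] nest_le[of "Suc j" m] by blast
      then show ?thesis using Nsub[of j] unfolding qball_def by blast
    qed
    have powle: "(1/2::real)^(Suc j) \<le> (1/2)^n0" if "n0 \<le> j" for j n0
      by (rule power_decreasing) (use that in auto)
    have cauchy: "qcauchy d cs"
      unfolding qcauchy_def
    proof (intro allI impI)
      fix \<epsilon> :: real assume e: "\<epsilon> > 0"
      obtain n0 where n0: "(1/2::real)^n0 < \<epsilon>" using real_arch_pow_inv[OF e, of "1/2"] by auto
      show "\<exists>n0. \<forall>n m. n0 \<le> n \<and> n \<le> m \<longrightarrow> d (cs n) (cs m) < \<epsilon>"
      proof (intro exI[of _ n0] allI impI)
        fix n m assume nm: "n0 \<le> n \<and> n \<le> m"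
        show "d (cs n) (cs m) < \<epsilon>"
        proof (cases "n = m")
          case True then show ?thesis using qm_refl[OF qm csX[of n]] e by simp
        next
          case False
          then have "d (cs n) (cs m) < rs n / 2" using dcs nm by simp
          moreover have "rs n \<le> (1/2)^n0" using rsle[of n] powle[of n0 n] nm by linarith
          ultimately show ?thesis using n0 rspos[of n] by linarith
        qed
      qed
    qed
    obtain c where cX: "c \<in> X" and clim: "(\<lambda>n. dhat d c (cs n)) \<longlonglongrightarrow> 0"
      using qc cauchy csX unfolding qcomplete_def by blast
    have dh1: "d (cs m) c \<le> dhat d c (cs m)" and dh2: "d c (cs m) \<le> dhat d c (cs m)" for m
      unfolding dhat_def by auto
    have evlim: "\<exists>M. \<forall>m\<ge>M. dhat d c (cs m) < e" if epos: "e > 0" for e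
    proof -
      obtain M where "\<forall>m\<ge>M. norm (dhat d c (cs m) - 0) < e" using LIMSEQ_D[OF clim epos] by blast
      then have "\<forall>m\<ge>M. dhat d c (cs m) < e" by (metis abs_less_iff diff_zero real_norm_def)
      then show ?thesis by blast
    qed
    have cball: "c \<in> qball X d (cs j) (rs j)" for j
    proof -
      have "rs j / 2 > 0" using rspos by simp
      then obtain M where M: "\<forall>m\<ge>M. dhat d c (cs m) < rs j / 2" using evlim by blast
      define m where "m = max M (Suc j)"
      have "d (cs j) c \<le> d (cs j) (cs m) + d (cs m) c" using qm_tri[OF qm csX csX cX] .
      moreover have "d (cs j) (cs m) < rs j / 2" using dcs[of j m] unfolding m_def by simp
      moreover have "dhat d c (cs m) < rs j / 2" using M unfolding m_def by simp
      then have "d (cs m) c < rs j / 2" using dh1[of m] by linarith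
      ultimately show ?thesis using cX unfolding qball_def by simp
    qed
    have cV: "c \<in> V" if VI: "V \<in> VS" and yV: "y \<in> H V" for V
    proof -
      obtain k where k: "en k = V" using enall[OF VI] by blast
      then have "Vs k = V" unfolding Vs_def using yV by simp
      then show ?thesis using cball[of k] ballsub[of k] by blast
    qed
    have cO: "y \<in> H Ob" if Oo: "openin \<tau> Ob" and cO: "c \<in> Ob" for Ob
    proof -
      obtain \<epsilon> where e: "\<epsilon> > 0" "qball X d c \<epsilon> \<subseteq> Ob"
        using qm_open_ball_sub[OF qm _ cO] Oo teq by blast
      have "\<epsilon>/2 > 0" using e by simp
      then obtain M where M: "\<forall>m\<ge>M. dhat d c (cs m) < \<epsilon>/2" using evlim by blast
      obtain n0 where n0: "(1/2::real)^n0 < \<epsilon>" using real_arch_pow_inv[OF e(1), of "1/2"] by auto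
      define j where "j = max M n0"
      have "Nn (Suc j) \<subseteq> qball X d c \<epsilon>"
      proof
        fix z assume "z \<in> Nn (Suc j)"
        then have zX: "z \<in> X" and dz: "d (cs j) z < rs j / 2" using Nsub[of j] unfolding qball_def by auto
        have "d c z \<le> d c (cs j) + d (cs j) z" using qm_tri[OF qm cX csX zX] .
        moreover have "dhat d c (cs j) < \<epsilon>/2" using M unfolding j_def by simp
        then have "d c (cs j) < \<epsilon>/2" using dh2[of j] by linarith
        moreover have "rs j \<le> (1/2)^n0" using rsle[of j] powle[of n0 j] unfolding j_def by simp
        ultimately have "d c z < \<epsilon>" using dz n0 by linarith
        then show "z \<in> qball X d c \<epsilon>" using zX unfolding qball_def by simp
      qed
      then have "Nn (Suc j) \<subseteq> Ob" using e(2) by blast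
      then show ?thesis using Hmono yN by blast
    qed
    have cP: "y \<in> H P" if PI: "P \<in> \<PP>" and cP: "c \<in> P" for P
    proof -
      obtain i where ci: "c \<in> UU P i" "c \<notin> VV P i" using cP Peq[OF PI] by blast
      have yU: "y \<in> H (UU P i)" using cO[OF UUo[OF PI] ci(1)] .
      have "VV P i \<in> VS" unfolding VS_def using PI by blast
      then have "y \<notin> H (VV P i)" using cV ci(2) by blast
      then show ?thesis using yR[OF PI, of i] yU unfolding R_def by blast
    qed
    show "y \<in> S"
    proof (rule ccontr)
      assume yS: "y \<notin> S"
      have gcS: "g c \<in> S" using cX unfolding S_def by blast
      then have "y \<noteq> g c" using yS by blast
      moreover have "g c \<in> topspace Z" using gcS SZ by blast
      ultimately obtain W1 W2 where W: "openin Z W1" "openin Z W2" "y \<in> W1" "g c \<in> W2" "disjnt W1 W2"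
        using HZ yZ unfolding Hausdorff_space_def by blast
      define A where "A = {x \<in> topspace \<tau>'. g x \<in> W2}"
      have Ao: "openin \<tau>' A" unfolding A_def by (rule openin_continuous_map_preimage[OF cont W(2)])
      have "c \<in> A" unfolding A_def using cX tX' W(4) by simp
      then obtain P where P: "P \<in> \<PP>" "c \<in> P" "P \<subseteq> A" using PP(3)[OF Ao] by blast
      have "y \<in> H P" using cP[OF P(1,2)] .
      then obtain W where Wh: "openin Z W" "y \<in> W" "W \<inter> S \<subseteq> g ` P" unfolding H_def by blast
      have gPW: "g ` P \<subseteq> W2" using P(3) unfolding A_def by blast
      have "openin Z (W \<inter> W1)" using Wh(1) W(1) by blast
      moreover have "y \<in> W \<inter> W1" using Wh(2) W(3) by blast
      ultimately obtain s where "s \<in> S" "s \<in> W \<inter> W1" using ycl unfolding in_closure_of by blast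
      then have "s \<in> W2" "s \<in> W1" using Wh(3) gPW by blast+
      then show False using W(5) unfolding disjnt_def by blast
    qed
  qed
  have "\<Inter>GG = S" using G1 G2 by blast
  moreover have "gdelta_in Z (\<Inter>GG)" using gdelta_in_Inter[OF cG _ gG] unfolding GG_def by blast
  ultimately show ?thesis unfolding S_def by simp
qed

theorem theorem75:
  fixes \<tau> \<tau>' :: "'a topology" and X :: "'a set"
  assumes "topspace \<tau> = X" and "topspace \<tau>' = X"
    and "quasi_Polish \<tau>"
    and "separable_space \<tau>'" and "metrizable_space \<tau>'"
    and "\<And>U. openin \<tau> U \<Longrightarrow> openin \<tau>' U"
    and "\<And>U. openin \<tau>' U \<Longrightarrow> U \<in> Sigma02 \<tau>"
  shows "Polish_space \<tau>'"
proof -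
  obtain d where sc: "second_countable \<tau>" and qm: "quasi_metric X d" and qc: "qcomplete X d"
    and teq: "\<tau> = qmtopology X d"
    using assms(3) assms(1) unfolding quasi_Polish_def by auto
  obtain M \<rho> where ms: "Metric_space M \<rho>" and teq': "\<tau>' = Metric_space.mtopology M \<rho>"
    using assms(5) unfolding metrizable_space_def by blast
  interpret Metric_space M \<rho> by (rule ms)
  have sc': "second_countable \<tau>'" using sep_imp_second_countable assms(4) teq' by simp
  obtain f :: "'a \<Rightarrow> 'a \<Rightarrow> real" and m' where mc: "mcomplete_of m'" and fim: "f \<in> M \<rightarrow> mspace m'"
    and clo: "mtopology_of m' closure_of f ` M = mspace m'"
    and isom: "\<And>x y. \<lbrakk>x \<in> M; y \<in> M\<rbrakk> \<Longrightarrow> mdist m' (f x) (f y) = \<rho> x y"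
    by (metis metric_completion)
  have emb0: "embedding_map mtopology (mtopology_of m') f"
    unfolding mtopology_of_def
    by (metis Metric_space12.isometry_imp_embedding_map Metric_space12_mspace_mdist mdist_metric mspace_metric fim isom)
  have emb: "embedding_map \<tau>' (mtopology_of m') f" using emb0 teq' by simp
  have cmZ: "completely_metrizable_space (mtopology_of m')"
    using mc unfolding mcomplete_of_def mtopology_of_def
    by (metis Metric_space.completely_metrizable_space_mtopology Metric_space_mspace_mdist)
  have gd: "gdelta_in (mtopology_of m') (f ` X)"
    by (rule main_gdelta[OF assms(1,2) qm qc teq sc sc' assms(6,7)
          completely_metrizable_imp_metrizable_space[OF cmZ] emb])
  have "completely_metrizable_space (subtopology (mtopology_of m') (f ` X))"
    by (rule completely_metrizable_space_gdelta_in[OF cmZ gd])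
  moreover have "\<tau>' homeomorphic_space subtopology (mtopology_of m') (f ` X)"
    using embedding_map_imp_homeomorphic_space[OF emb] assms(2) by simp
  ultimately have "completely_metrizable_space \<tau>'"
    using homeomorphic_completely_metrizable_space by blast
  then show ?thesis unfolding Polish_space_def using assms(4) by blast
qed

end
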